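(* Let $p\ge1$, $m\in\mathbb{N}$, $a,b>0$, $\beta\in\mathbb{R}^p$, let $\xi$ be a design on $\mathcal{X}$, and define $$L(\xi;\beta)=I-\frac{M_{Po}(\xi;\beta)e_1e_1^T}{e_1^TM_{Po}(\xi;\beta)e_1+\frac{b}{m}},$$ with $I$ the $p\times p$ identity matrix. Then: (i) $M(\xi;\beta)=\frac{a}{b}L(\xi;\beta)M_{Po}(\xi;\beta)=\frac{a}{b}M_{Po}(\xi;\beta)L(\xi;\beta)^T$; (ii) $L(\xi;\beta)$ is regular; (iii) $L(\xi;\beta)=I-\frac{m}{a}M(\xi;\beta)e_1e_1^T$.
   Context: Let $\mathcal{X}\subseteq\mathbb{R}^k$ be a design region and $f=(1,f_1,\ldots,f_{p-1})^T:\mathcal{X}\to\mathbb{R}^p$ a vector of regression functions whose first component is the constant 1. A design $\xi$ is a probability measure on $\mathcal{X}$ with finite support $x_1,\ldots,x_l$ and weights $w_1,\ldots,w_l\ge0$, $\sum_j w_j=1$. The Poisson information matrix is $M_{Po}(\xi;\beta)=\sum_{j=1}^l w_j\exp(f(x_j)^T\beta)f(x_j)f(x_j)^T$, and the Poisson–Gamma information matrix is $M(\xi;\beta)=\frac{a}{b}\Bigl(M_{Po}(\xi;\beta)-\frac{M_{Po}(\xi;\beta)e_1e_1^TM_{Po}(\xi;\beta)}{e_1^TM_{Po}(\xi;\beta)e_1+b/m}\Bigr)$, where $e_1$ is the first standard unit vector of $\mathbb{R}^p$. *)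

theory Defs
  imports "Jordan_Normal_Form.Matrix"
begin

definition outer :: "real vec \<Rightarrow> real vec \<Rightarrow> real mat" where
  "outer u v = mat (dim_vec u) (dim_vec v) (\<lambda>(i,j). u $ i * v $ j)"

(* first standard unit vector e_1 of R^p (index 0 in 0-based indexing) *)
definition e1 :: "nat \<Rightarrow> real vec" where
  "e1 p = unit_vec p 0"

(* design with support points xs 0..xs (l-1) and weights w 0..w (l-1) *)
definition is_design :: "'x set \<Rightarrow> nat \<Rightarrow> (nat \<Rightarrow> 'x) \<Rightarrow> (nat \<Rightarrow> real) \<Rightarrow> bool" where
  "is_design X l xs w \<longleftrightarrow> (\<forall>j<l. xs j \<in> X \<and> w j \<ge> 0) \<and> (\<Sum>j<l. w j) = 1"

definition M_Po :: "nat \<Rightarrow> ('x \<Rightarrow> real vec) \<Rightarrow> nat \<Rightarrow> (nat \<Rightarrow> 'x) \<Rightarrow> (nat \<Rightarrow> real)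
                     \<Rightarrow> real vec \<Rightarrow> real mat" where
  "M_Po p f l xs w \<beta> =
     mat p p (\<lambda>(i,k). \<Sum>j<l. w j * exp (f (xs j) \<bullet> \<beta>) * (f (xs j) $ i) * (f (xs j) $ k))"

definition M_PG :: "real \<Rightarrow> real \<Rightarrow> nat \<Rightarrow> nat \<Rightarrow> ('x \<Rightarrow> real vec) \<Rightarrow> nat \<Rightarrow> (nat \<Rightarrow> 'x)
                     \<Rightarrow> (nat \<Rightarrow> real) \<Rightarrow> real vec \<Rightarrow> real mat" where
  "M_PG a b m p f l xs w \<beta> =
     (let MP = M_Po p f l xs w \<beta>; e = e1 p in
      (a / b) \<cdot>\<^sub>m (MP - (1 / (e \<bullet> (MP *\<^sub>v e) + b / real m)) \<cdot>\<^sub>m (MP * outer e e * MP)))"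

definition L_mat :: "real \<Rightarrow> nat \<Rightarrow> nat \<Rightarrow> ('x \<Rightarrow> real vec) \<Rightarrow> nat \<Rightarrow> (nat \<Rightarrow> 'x)
                     \<Rightarrow> (nat \<Rightarrow> real) \<Rightarrow> real vec \<Rightarrow> real mat" where
  "L_mat b m p f l xs w \<beta> =
     (let MP = M_Po p f l xs w \<beta>; e = e1 p in
      1\<^sub>m p - (1 / (e \<bullet> (MP *\<^sub>v e) + b / real m)) \<cdot>\<^sub>m (MP * outer e e))"

end

theory Submission
  imports Defs
begin

lemma outer_e1_entry:
  assumes "i < p" "k < p"
  shows "outer (e1 p) (e1 p) $$ (i,k) = (if i = 0 \<and> k = 0 then 1 else 0)"
  using assms by (simp add: outer_def e1_def)

lemma outer_e1_carrier: "outer (e1 p) (e1 p) \<in> carrier_mat p p"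
  by (simp add: outer_def e1_def)

lemma ME_entry:
  assumes M: "M \<in> carrier_mat p p" and "i < p" "k < p"
  shows "(M * outer (e1 p) (e1 p)) $$ (i,k) = (if k = 0 then M $$ (i,0) else 0)"
proof -
  have p: "0 < p" using assms by auto
  have "(M * outer (e1 p) (e1 p)) $$ (i,k) = (\<Sum>j<p. M $$ (i,j) * outer (e1 p) (e1 p) $$ (j,k))"
    using assms outer_e1_carrier[of p] by (simp add: scalar_prod_def lessThan_atLeast0)
  also have "\<dots> = (\<Sum>j<p. M $$ (i,j) * (if j = 0 \<and> k = 0 then 1 else 0))"
    by (rule sum.cong) (use assms in \<open>auto simp: outer_e1_entry\<close>)
  also have "\<dots> = (if k = 0 then M $$ (i,0) else 0)"
    using p by (simp add: if_distrib cong: if_cong)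
  finally show ?thesis .
qed

lemma col0_mult_entry:
  assumes A: "A \<in> carrier_mat p p" and N: "N \<in> carrier_mat p q" and "i < p" "k < q"
    and z: "\<And>i j. i < p \<Longrightarrow> j < p \<Longrightarrow> j \<noteq> 0 \<Longrightarrow> A $$ (i,j) = 0"
  shows "(A * N) $$ (i,k) = A $$ (i,0) * N $$ (0,k)"
proof -
  have p: "0 < p" using assms by auto
  have "(A * N) $$ (i,k) = (\<Sum>j<p. A $$ (i,j) * N $$ (j,k))"
    using assms by (simp add: scalar_prod_def lessThan_atLeast0)
  also have "\<dots> = (\<Sum>j<p. if j = 0 then A $$ (i,0) * N $$ (0,k) else 0)"
    by (rule sum.cong) (use z assms in auto)
  also have "\<dots> = A $$ (i,0) * N $$ (0,k)" using p by simp
  finally show ?thesis .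
qed

lemma general:
  fixes M :: "real mat" and a b :: real and m p :: nat
  assumes M: "M \<in> carrier_mat p p" and p: "0 < p"
    and sym: "\<And>i k. i < p \<Longrightarrow> k < p \<Longrightarrow> M $$ (i,k) = M $$ (k,i)"
    and s0: "M $$ (0,0) \<ge> 0" and m: "m \<ge> 1" and a: "a > 0" and b: "b > 0"
  defines "E \<equiv> outer (e1 p) (e1 p)"
  defines "c \<equiv> 1 / (e1 p \<bullet> (M *\<^sub>v e1 p) + b / real m)"
  defines "PG \<equiv> (a / b) \<cdot>\<^sub>m (M - c \<cdot>\<^sub>m (M * E * M))"
  defines "L \<equiv> 1\<^sub>m p - c \<cdot>\<^sub>m (M * E)"
  shows "PG = (a / b) \<cdot>\<^sub>m (L * M)
       \<and> PG = (a / b) \<cdot>\<^sub>m (M * L\<^sup>T)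
       \<and> invertible_mat L
       \<and> L = 1\<^sub>m p - (real m / a) \<cdot>\<^sub>m (PG * E)"
proof -
  let ?s = "M $$ (0,0)"
  have E: "E \<in> carrier_mat p p" unfolding E_def by (rule outer_e1_carrier)
  have ME: "M * E \<in> carrier_mat p p" using M E by simp
  have MEd: "dim_row (M * E) = p" "dim_col (M * E) = p" using ME by auto
  have sdef: "e1 p \<bullet> (M *\<^sub>v e1 p) = ?s"
    using M p by (simp add: e1_def)
  have mpos: "real m > 0" using m by simp
  have dpos: "?s + b / real m > 0" using s0 b mpos by (simp add: add_nonneg_pos)
  have cd: "c * (?s + b / real m) = 1" unfolding c_def sdef using dpos by simp
  have MEe: "\<And>i k. i < p \<Longrightarrow> k < p \<Longrightarrow> (M * E) $$ (i,k) = (if k = 0 then M $$ (i,0) else 0)"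
    unfolding E_def using M by (rule ME_entry)
  have MEM: "\<And>i k. i < p \<Longrightarrow> k < p \<Longrightarrow> (M * E * M) $$ (i,k) = M $$ (i,0) * M $$ (0,k)"
  proof -
    fix i k assume ik: "i < p" "k < p"
    have "(M * E * M) $$ (i,k) = (M * E) $$ (i,0) * M $$ (0,k)"
      by (rule col0_mult_entry[OF ME M ik]) (simp add: MEe)
    then show "(M * E * M) $$ (i,k) = M $$ (i,0) * M $$ (0,k)" using MEe[of i 0] ik p by simp
  qed
  have X: "c \<cdot>\<^sub>m (M * E) \<in> carrier_mat p p" using ME by simp
  have Xz: "\<And>i j. i < p \<Longrightarrow> j < p \<Longrightarrow> j \<noteq> 0 \<Longrightarrow> (c \<cdot>\<^sub>m (M * E)) $$ (i,j) = 0"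
    using ME by (simp add: MEe carrier_matD del: index_mult_mat)
  have Xe: "\<And>i. i < p \<Longrightarrow> (c \<cdot>\<^sub>m (M * E)) $$ (i,0) = c * M $$ (i,0)"
    using p by (simp add: MEe MEd del: index_mult_mat)
  have Lc: "L \<in> carrier_mat p p" unfolding L_def using X by (rule minus_carrier_mat)
  have Le: "\<And>i k. i < p \<Longrightarrow> k < p \<Longrightarrow> L $$ (i,k) = (if i = k then 1 else 0) - (if k = 0 then c * M $$ (i,0) else 0)"
    unfolding L_def by (simp add: MEe MEd del: index_mult_mat)
  have LM: "L * M = M - c \<cdot>\<^sub>m (M * E) * M"
    unfolding L_def using M by (simp add: minus_mult_distrib_mat[OF one_carrier_mat X M])
  have LMe: "\<And>i k. i < p \<Longrightarrow> k < p \<Longrightarrow> (L * M) $$ (i,k) = M $$ (i,k) - c * M $$ (i,0) * M $$ (0,k)"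
  proof -
    fix i k assume ik: "i < p" "k < p"
    have "(c \<cdot>\<^sub>m (M * E) * M) $$ (i,k) = (c \<cdot>\<^sub>m (M * E)) $$ (i,0) * M $$ (0,k)"
      by (rule col0_mult_entry[OF X M ik Xz])
    moreover have "(M - c \<cdot>\<^sub>m (M * E) * M) $$ (i,k) = M $$ (i,k) - (c \<cdot>\<^sub>m (M * E) * M) $$ (i,k)"
      using ik X M by (intro index_minus_mat) auto
    ultimately show "(L * M) $$ (i,k) = M $$ (i,k) - c * M $$ (i,0) * M $$ (0,k)"
      unfolding LM using ik Xe[of i] by simp
  qed
  have MEMc: "M * E * M \<in> carrier_mat p p" using ME M by simp
  have Zc: "M - c \<cdot>\<^sub>m (M * E * M) \<in> carrier_mat p p"
    using MEMc by (intro minus_carrier_mat) simp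
  have PGc: "PG \<in> carrier_mat p p" unfolding PG_def using Zc by simp
  have PGe: "\<And>i k. i < p \<Longrightarrow> k < p \<Longrightarrow> PG $$ (i,k) = (a/b) * (M $$ (i,k) - c * (M $$ (i,0) * M $$ (0,k)))"
  proof -
    fix i k assume ik: "i < p" "k < p"
    have "PG $$ (i,k) = (a/b) * (M - c \<cdot>\<^sub>m (M * E * M)) $$ (i,k)"
      unfolding PG_def using Zc ik by (intro index_smult_mat) auto
    also have "(M - c \<cdot>\<^sub>m (M * E * M)) $$ (i,k) = M $$ (i,k) - (c \<cdot>\<^sub>m (M * E * M)) $$ (i,k)"
      using MEMc ik by (intro index_minus_mat) auto
    also have "(c \<cdot>\<^sub>m (M * E * M)) $$ (i,k) = c * (M * E * M) $$ (i,k)"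
      using MEMc ik by (intro index_smult_mat) auto
    finally show "PG $$ (i,k) = (a/b) * (M $$ (i,k) - c * (M $$ (i,0) * M $$ (0,k)))"
      using MEM[OF ik] by simp
  qed
  have LMc: "L * M \<in> carrier_mat p p" using Lc M by simp
  have 1: "PG = (a / b) \<cdot>\<^sub>m (L * M)"
  proof (rule eq_matI)
    fix i k assume "i < dim_row ((a / b) \<cdot>\<^sub>m (L * M))" "k < dim_col ((a / b) \<cdot>\<^sub>m (L * M))"
    then have ik: "i < p" "k < p" using LMc by auto
    have "((a / b) \<cdot>\<^sub>m (L * M)) $$ (i,k) = (a/b) * (L * M) $$ (i,k)"
      using LMc ik by (intro index_smult_mat) auto
    then show "PG $$ (i,k) = ((a / b) \<cdot>\<^sub>m (L * M)) $$ (i,k)"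
      using PGe[OF ik] LMe[OF ik] by (simp add: algebra_simps)
  qed (use PGc LMc in auto)
  have 2: "PG = (a / b) \<cdot>\<^sub>m (M * L\<^sup>T)"
  proof -
    have "M * L\<^sup>T = (L * M)\<^sup>T"
    proof -
      have "M\<^sup>T = M" by (rule eq_matI) (use M sym in auto)
      then show ?thesis using transpose_mult[OF Lc M] by simp
    qed
    moreover have "PG = (a / b) \<cdot>\<^sub>m (L * M)\<^sup>T"
    proof (rule eq_matI)
      fix i k assume "i < dim_row ((a / b) \<cdot>\<^sub>m (L * M)\<^sup>T)" "k < dim_col ((a / b) \<cdot>\<^sub>m (L * M)\<^sup>T)"
      then have ik: "i < p" "k < p" using LMc by auto
      have tr: "((a / b) \<cdot>\<^sub>m (L * M)\<^sup>T) $$ (i,k) = (a/b) * (L * M) $$ (k,i)"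
      proof -
        have d: "dim_row (L * M) = p" "dim_col (L * M) = p" using LMc by auto
        show ?thesis using ik by (simp add: d del: index_mult_mat)
      qed
      then show "PG $$ (i,k) = ((a / b) \<cdot>\<^sub>m (L * M)\<^sup>T) $$ (i,k)"
      proof -
        have e: "M $$ (k,i) = M $$ (i,k)" "M $$ (k,0) = M $$ (0,k)" "M $$ (0,i) = M $$ (i,0)"
          using sym ik p by auto
        show ?thesis using tr PGe[OF ik] LMe[of k i] ik unfolding e by (simp add: algebra_simps)
      qed
    qed (use PGc LMc in auto)
    ultimately show ?thesis by simp
  qed
  define t where "t = real m / b"
  have Y: "t \<cdot>\<^sub>m (M * E) \<in> carrier_mat p p" using ME by simp
  have Yz: "\<And>i j. i < p \<Longrightarrow> j < p \<Longrightarrow> j \<noteq> 0 \<Longrightarrow> (t \<cdot>\<^sub>m (M * E)) $$ (i,j) = 0"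
    using ME by (simp add: MEe carrier_matD del: index_mult_mat)
  define B where "B = 1\<^sub>m p + t \<cdot>\<^sub>m (M * E)"
  have Ye: "\<And>i. i < p \<Longrightarrow> (t \<cdot>\<^sub>m (M * E)) $$ (i,0) = t * M $$ (i,0)"
    using p by (simp add: MEe MEd del: index_mult_mat)
  have Bc: "B \<in> carrier_mat p p" unfolding B_def using Y by simp
  have Be: "\<And>i k. i < p \<Longrightarrow> k < p \<Longrightarrow> B $$ (i,k) = (if i = k then 1 else 0) + (if k = 0 then t * M $$ (i,0) else 0)"
    unfolding B_def by (simp add: MEe MEd del: index_mult_mat)
  have key: "c + c * t * ?s = t"
  proof -
    have "c * ?s + c * (b / real m) = 1" using cd by (simp add: algebra_simps)
    then show ?thesis unfolding t_def using mpos b by (simp add: field_simps)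
  qed
  have LB: "L * B = 1\<^sub>m p"
  proof -
    have eq: "L * B = B - c \<cdot>\<^sub>m (M * E) * B"
      unfolding L_def using Bc by (simp add: minus_mult_distrib_mat[OF one_carrier_mat X Bc])
    show ?thesis
    proof (rule eq_matI)
      fix i k assume ik: "i < dim_row (1\<^sub>m p)" "k < dim_col (1\<^sub>m p)"
      then have ik: "i < p" "k < p" by auto
      have h1: "(c \<cdot>\<^sub>m (M * E) * B) $$ (i,k) = (c \<cdot>\<^sub>m (M * E)) $$ (i,0) * B $$ (0,k)"
        by (rule col0_mult_entry[OF X Bc ik Xz])
      have h2: "(B - c \<cdot>\<^sub>m (M * E) * B) $$ (i,k) = B $$ (i,k) - (c \<cdot>\<^sub>m (M * E) * B) $$ (i,k)"
        using ik X Bc by (intro index_minus_mat) auto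
      show "(L * B) $$ (i,k) = 1\<^sub>m p $$ (i,k)"
      proof -
        have k1: "c * M $$ (i,0) * (1 + t * ?s) = t * M $$ (i,0)"
          using arg_cong[OF key, of "\<lambda>x. M $$ (i,0) * x"] by (simp add: algebra_simps)
        show ?thesis
          unfolding eq using h1 h2 ik p Xe[of i] Be[of i k] Be[of 0 k] k1
          by (cases "k = 0") (simp_all add: algebra_simps)
      qed
    qed (use Lc Bc in auto)
  qed
  have BL: "B * L = 1\<^sub>m p"
  proof -
    have eq: "B * L = L + t \<cdot>\<^sub>m (M * E) * L"
      unfolding B_def using Lc by (simp add: add_mult_distrib_mat[OF one_carrier_mat Y Lc])
    show ?thesis
    proof (rule eq_matI)
      fix i k assume ik: "i < dim_row (1\<^sub>m p)" "k < dim_col (1\<^sub>m p)"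
      then have ik: "i < p" "k < p" by auto
      have h1: "(t \<cdot>\<^sub>m (M * E) * L) $$ (i,k) = (t \<cdot>\<^sub>m (M * E)) $$ (i,0) * L $$ (0,k)"
        by (rule col0_mult_entry[OF Y Lc ik Yz])
      have h2: "(L + t \<cdot>\<^sub>m (M * E) * L) $$ (i,k) = L $$ (i,k) + (t \<cdot>\<^sub>m (M * E) * L) $$ (i,k)"
        using ik Y Lc by (intro index_add_mat) auto
      show "(B * L) $$ (i,k) = 1\<^sub>m p $$ (i,k)"
      proof -
        have k1: "t * M $$ (i,0) * (1 - c * ?s) = c * M $$ (i,0)"
          using arg_cong[OF key, of "\<lambda>x. M $$ (i,0) * x"] by (simp add: algebra_simps)
        show ?thesis
          unfolding eq using h1 h2 ik p Ye[of i] k1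
          by (cases "k = 0") (simp_all add: Le algebra_simps)
      qed
    qed (use Lc Bc in auto)
  qed
  have 3: "invertible_mat L"
    unfolding invertible_mat_def inverts_mat_def using LB BL Lc Bc by auto
  have 4: "L = 1\<^sub>m p - (real m / a) \<cdot>\<^sub>m (PG * E)"
  proof (rule eq_matI)
    fix i k assume ik: "i < dim_row (1\<^sub>m p - (real m / a) \<cdot>\<^sub>m (PG * E))" "k < dim_col (1\<^sub>m p - (real m / a) \<cdot>\<^sub>m (PG * E))"
    then have ik: "i < p" "k < p" using PGc E by auto
    have PEc: "PG * E \<in> carrier_mat p p" using PGc E by simp
    have f1: "(PG * E) $$ (i,k) = (if k = 0 then PG $$ (i,0) else 0)"
      unfolding E_def using PGc ik by (rule ME_entry)
    have f2: "c = real m / a * (a / b * (1 - c * ?s))"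
      using key a b mpos unfolding t_def by (simp add: field_simps, metis distrib_left)
    have f3: "(1\<^sub>m p - (real m / a) \<cdot>\<^sub>m (PG * E)) $$ (i,k) = 1\<^sub>m p $$ (i,k) - ((real m / a) \<cdot>\<^sub>m (PG * E)) $$ (i,k)"
      using ik PEc by (intro index_minus_mat) auto
    have f4: "((real m / a) \<cdot>\<^sub>m (PG * E)) $$ (i,k) = (real m / a) * (PG * E) $$ (i,k)"
      using ik PEc by (intro index_smult_mat) auto
    show "L $$ (i,k) = (1\<^sub>m p - (real m / a) \<cdot>\<^sub>m (PG * E)) $$ (i,k)"
    proof (cases "k = 0")
      case True
      have "L $$ (i,k) = (if i = 0 then 1 else 0) - c * M $$ (i,0)" using Le[OF ik] True by simp
      also have "\<dots> = (if i = 0 then 1 else 0) - (real m / a) * PG $$ (i,0)"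
      proof -
        have "(real m / a) * PG $$ (i,0) = M $$ (i,0) * (real m / a * (a / b * (1 - c * ?s)))"
          unfolding PGe[OF ik(1) p] by (simp add: algebra_simps)
        then show ?thesis unfolding f2[symmetric] by (simp add: mult.commute)
      qed
      finally show ?thesis using f1 f3 f4 True ik by simp
    next
      case False
      then show ?thesis using f1 f3 f4 ik Le[OF ik] by simp
    qed
  qed (use Lc PGc E in auto)
  show ?thesis using 1 2 3 4 by blast
qed

theorem lemma3:
  fixes X :: "'x set" and f :: "'x \<Rightarrow> real vec" and p m l :: nat
    and a b :: real and \<beta> :: "real vec" and xs :: "nat \<Rightarrow> 'x" and w :: "nat \<Rightarrow> real"
  assumes "p \<ge> 1" and "m \<ge> 1" and "a > 0" and "b > 0"
    and "dim_vec \<beta> = p"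
    and "\<forall>x\<in>X. dim_vec (f x) = p \<and> f x $ 0 = 1"
    and "is_design X l xs w"
  shows "M_PG a b m p f l xs w \<beta> = (a / b) \<cdot>\<^sub>m (L_mat b m p f l xs w \<beta> * M_Po p f l xs w \<beta>)
       \<and> M_PG a b m p f l xs w \<beta> = (a / b) \<cdot>\<^sub>m (M_Po p f l xs w \<beta> * (L_mat b m p f l xs w \<beta>)\<^sup>T)
       \<and> invertible_mat (L_mat b m p f l xs w \<beta>)
       \<and> L_mat b m p f l xs w \<beta> = 1\<^sub>m p - (real m / a) \<cdot>\<^sub>m (M_PG a b m p f l xs w \<beta> * outer (e1 p) (e1 p))"
proof -
  let ?M = "M_Po p f l xs w \<beta>"
  have p: "0 < p" using assms(1) by simp
  have Mc: "?M \<in> carrier_mat p p" by (simp add: M_Po_def)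
  have sym: "\<And>i k. i < p \<Longrightarrow> k < p \<Longrightarrow> ?M $$ (i,k) = ?M $$ (k,i)"
    by (simp add: M_Po_def mult.commute mult.left_commute)
  have s0: "?M $$ (0,0) \<ge> 0"
  proof -
    have "?M $$ (0,0) = (\<Sum>j<l. w j * exp (f (xs j) \<bullet> \<beta>) * (f (xs j) $ 0) * (f (xs j) $ 0))"
      using p by (simp add: M_Po_def)
    also have "\<dots> \<ge> 0"
    proof (rule sum_nonneg)
      fix j assume "j \<in> {..<l}"
      then have "xs j \<in> X" "w j \<ge> 0" using assms(7) by (auto simp: is_design_def)
      then show "0 \<le> w j * exp (f (xs j) \<bullet> \<beta>) * (f (xs j) $ 0) * (f (xs j) $ 0)"
        using assms(6) by simp
    qed
    finally show ?thesis .
  qed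
  show ?thesis
    unfolding M_PG_def L_mat_def Let_def
    by (rule general[OF Mc p sym s0 assms(2) assms(3) assms(4)])
qed

end
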